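(* Let $N\ge2$ and let $F$ be any marginal distribution as in the context. Define, for $r\in(0,1]$, $$L(r)=\int_{[0,r]}\frac{x^{\frac N{N-1}}}{r^{\frac1{N-1}}}\,dF(x)+r(1-F(r)),$$ and let $r^*$ be a maximizer of $L$ over $(0,1]$. Then the revenue guarantee of the second price auction with random reserve distributed according to $G_{r^*}(x)=(x/r^* )^{\frac1{N-1}}$, $x\in[0,r^*]$, is strictly greater than the revenue guarantee of the posted price mechanism, which equals $\max_{x\in[0,1]}x(1-F(x))$. That is, this auction robustly dominates the posted price mechanism.
   Context: A single indivisible good is sold to $N$ bidders with private values $v_i\in[0,1]$, each with the same marginal cdf $F$ whose support is $[0,1]$ (point masses allowed). $\Pi(F)$ is the set of probability measures on $[0,1]^N$ with all one-dimensional marginals equal to $F$. For a mechanism $(q,t)$ (allocation $q:[0,1]^N\to[0,1]^N$ with $\sum_iq_i\le1$, payments $t:[0,1]^N\to\mathbb{R}^N$) used with truthful bidding, its revenue guarantee is $\inf_{\pi\in\Pi(F)}\int\sum_it_i\,d\pi$. The second price auction with random reserve distributed as a cdf $G$: a reserve $\rho\sim G$ is drawn independently; a highest bidder (ties broken uniformly at random) wins if her bid is at least $\rho$ and pays $\max(\rho,\text{second highest bid})$; equivalently, a unique highest bidder with value $v_{(1)}$ receives the good with probability $G(v_{(1)})$ and pays $v_{(1)}G(v_{(1)})-\int_{v_{(2)}}^{v_{(1)}}G(s)\,ds$. The posted price mechanism posts a price and sells to a bidder willing to pay it; its revenue guarantee (the monopoly profit against the maximally positively correlated structure) is $\max_{x\in[0,1]}x(1-F(x))$.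 A mechanism $M_1$ robustly dominates $M_2$ if the revenue guarantee of $M_1$ is strictly greater than that of $M_2$ for every marginal distribution. *)

theory Defs
  imports "HOL-Probability.Probability"
begin

text \<open>A marginal distribution F on [0,1] (point masses allowed), represented by its
  probability measure mu on the reals; F = cdf mu. Support equals [0,1].\<close>
definition is_marginal :: "real measure \<Rightarrow> bool" where
  "is_marginal \<mu> \<longleftrightarrow> prob_space \<mu> \<and> sets \<mu> = sets borel \<and> measure \<mu> {0..1} = 1 \<and>
     (\<forall>x\<in>{0..1}. \<forall>e>0. measure \<mu> {x - e<..<x + e} > 0)"

text \<open>Highest and second highest bid among bidders 0..N-1 (with multiplicity).\<close>
definition top1 :: "nat \<Rightarrow> (nat \<Rightarrow> real) \<Rightarrow> real" where
  "top1 N v = Max (v ` {..<N})"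

definition top2 :: "nat \<Rightarrow> (nat \<Rightarrow> real) \<Rightarrow> real" where
  "top2 N v = Max {min (v i) (v j) | i j. i < N \<and> j < N \<and> i \<noteq> j}"

definition joint_structures :: "nat \<Rightarrow> real measure \<Rightarrow> (nat \<Rightarrow> real) measure set" where
  "joint_structures N \<mu> = {\<pi>. prob_space \<pi> \<and> sets \<pi> = sets (PiM {..<N} (\<lambda>_. borel)) \<and>
       (\<forall>i<N. distr \<pi> borel (\<lambda>v. v i) = \<mu>)}"

text \<open>Revenue guarantee of a mechanism whose (truthful) total revenue at profile v is R v.\<close>
definition revenue_guarantee ::
  "nat \<Rightarrow> real measure \<Rightarrow> ((nat \<Rightarrow> real) \<Rightarrow> real) \<Rightarrow> real" where
  "revenue_guarantee N \<mu> R = (INF \<pi> \<in> joint_structures N \<mu>. integral\<^sup>L \<pi> R)"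

text \<open>Total revenue of the second price auction with random reserve distributed as cdf G.\<close>
definition spa_reserve_revenue :: "(real \<Rightarrow> real) \<Rightarrow> nat \<Rightarrow> (nat \<Rightarrow> real) \<Rightarrow> real" where
  "spa_reserve_revenue G N v =
     top1 N v * G (top1 N v) - integral {top2 N v..top1 N v} G"

definition reserve_cdf :: "nat \<Rightarrow> real \<Rightarrow> real \<Rightarrow> real" where
  "reserve_cdf N r x =
     (if x \<le> 0 then 0 else if r \<le> x then 1 else (x / r) powr (1 / real (N - 1)))"

definition L_fun :: "nat \<Rightarrow> real measure \<Rightarrow> real \<Rightarrow> real" where
  "L_fun N \<mu> r =
     set_lebesgue_integral \<mu> {0..r}
        (\<lambda>x. x powr (real N / real (N - 1)) / r powr (1 / real (N - 1)))
     + r * (1 - cdf \<mu> r)"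

definition posted_price_guarantee :: "real measure \<Rightarrow> real" where
  "posted_price_guarantee \<mu> = (SUP x \<in> {0..1}. x * (1 - cdf \<mu> x))"

end

theory Submission
  imports Defs
begin


definition phiF :: "nat \<Rightarrow> real \<Rightarrow> real \<Rightarrow> real" where
  "phiF N r x = (if x \<le> 0 then 0 else if x \<le> r then
     x powr (real N / real (N - 1)) / r powr (1 / real (N - 1)) else r)"

definition PhiF :: "nat \<Rightarrow> real \<Rightarrow> real \<Rightarrow> real" where
  "PhiF N r x = integral {0..x} (reserve_cdf N r)"


lemma top1_in: "N > 0 \<Longrightarrow> \<exists>i<N. v i = top1 N v"
proof -
  assume "N > 0"
  then have "top1 N v \<in> v ` {..<N}" unfolding top1_def by (intro Max_in) auto
  then show ?thesis by auto
qed

lemma top1_ge: "i < N \<Longrightarrow> v i \<le> top1 N v"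
  unfolding top1_def by (intro Max_ge) auto

definition pairsN :: "nat \<Rightarrow> (nat \<times> nat) set" where
  "pairsN N = {(i, j). i < N \<and> j < N \<and> i \<noteq> j}"

lemma pairsN_finite: "finite (pairsN N)"
  unfolding pairsN_def by (rule finite_subset[of _ "{..<N} \<times> {..<N}"]) auto

lemma top2_alt: "top2 N v = Max ((\<lambda>ij. min (v (fst ij)) (v (snd ij))) ` pairsN N)"
proof -
  have "{min (v i) (v j) | i j. i < N \<and> j < N \<and> i \<noteq> j} = (\<lambda>ij. min (v (fst ij)) (v (snd ij))) ` pairsN N"
    unfolding pairsN_def by force
  then show ?thesis unfolding top2_def by simp
qed

lemma pairsN_ne: "N \<ge> 2 \<Longrightarrow> pairsN N \<noteq> {}"
proof -
  assume "N \<ge> 2"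
  then have "(0, 1) \<in> pairsN N" unfolding pairsN_def by simp
  then show ?thesis by blast
qed

lemma top2_in: "N \<ge> 2 \<Longrightarrow> \<exists>i j. i < N \<and> j < N \<and> i \<noteq> j \<and> top2 N v = min (v i) (v j)"
proof -
  assume N: "N \<ge> 2"
  have "top2 N v \<in> (\<lambda>ij. min (v (fst ij)) (v (snd ij))) ` pairsN N"
    unfolding top2_alt using pairsN_finite pairsN_ne[OF N] by (intro Max_in) auto
  then show ?thesis unfolding pairsN_def by (auto; blast)
qed

lemma top2_ge: "i < N \<Longrightarrow> j < N \<Longrightarrow> i \<noteq> j \<Longrightarrow> min (v i) (v j) \<le> top2 N v"
proof -
  assume "i < N" "j < N" "i \<noteq> j"
  then have "(i, j) \<in> pairsN N" unfolding pairsN_def by simp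
  then show ?thesis unfolding top2_alt using pairsN_finite
    by (intro Max_ge) (auto intro!: image_eqI[of _ _ "(i, j)"])
qed

lemma top2_le_top1: "N \<ge> 2 \<Longrightarrow> top2 N v \<le> top1 N v"
  using top2_in[of N v] top1_ge[of _ N v] by force

lemma comp_meas: "i < N \<Longrightarrow> (\<lambda>v. v i) \<in> borel_measurable (PiM {..<N} (\<lambda>_. borel))"
  using measurable_component_singleton[of i "{..<N}" "\<lambda>_. borel"] by simp

lemma top_meas:
  "top1 N \<in> borel_measurable (PiM {..<N} (\<lambda>_. borel))"
  "top2 N \<in> borel_measurable (PiM {..<N} (\<lambda>_. borel))"
proof -
  show "top1 N \<in> borel_measurable (PiM {..<N} (\<lambda>_. borel))"
    unfolding top1_def[abs_def]
    by (rule borel_measurable_Max[of "{..<N}" "\<lambda>i v. v i", simplified]) auto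
  have m: "(\<lambda>v::nat\<Rightarrow>real. min (v (fst ij)) (v (snd ij))) \<in> borel_measurable (PiM {..<N} (\<lambda>_. borel))"
    if "ij \<in> pairsN N" for ij
    using that unfolding pairsN_def by (cases ij) (auto intro!: borel_measurable_min comp_meas)
  have "(\<lambda>v::nat\<Rightarrow>real. Max ((\<lambda>ij. min (v (fst ij)) (v (snd ij))) ` pairsN N)) \<in> borel_measurable (PiM {..<N} (\<lambda>_. borel))"
    by (rule borel_measurable_Max[OF pairsN_finite[of N], where f="\<lambda>ij v. min (v (fst ij)) (v (snd ij))", OF m])
  then show "top2 N \<in> borel_measurable (PiM {..<N} (\<lambda>_. borel))"
    unfolding top2_alt[abs_def] .
qed

context
  fixes N :: nat and r :: real
  assumes N2: "N \<ge> 2" and r0: "0 < r" and r1: "r \<le> 1"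
begin

private abbreviation "k \<equiv> 1 / real (N - 1)"
private abbreviation "p \<equiv> real N / real (N - 1)"

lemma k_pos: "k > 0" using N2 by simp

lemma p_eq: "p = 1 + k"
proof -
  have "real (N - 1) = real N - 1" using N2 by (simp add: of_nat_diff)
  moreover have "real N - 1 > 0" using N2 by simp
  ultimately show ?thesis by (simp add: field_simps)
qed

lemma G_alt: "reserve_cdf N r x = min 1 ((max x 0 / r) powr k)"
proof -
  have "(x / r) powr k \<ge> 1" if "r \<le> x"
    using that r0 k_pos by (intro ge_one_powr_ge_zero) (auto simp: field_simps)
  moreover have "(x / r) powr k \<le> 1" if "0 < x" "x < r"
    using that r0 k_pos by (intro powr_le1) (auto simp: field_simps)
  ultimately show ?thesis using r0 k_pos
    unfolding reserve_cdf_def by (auto simp: max_def min_def)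
qed

lemma G_cont: "continuous_on UNIV (reserve_cdf N r)"
proof -
  have "continuous_on UNIV (\<lambda>x. min 1 ((max x 0 / r) powr k))"
    using k_pos r0
    by (intro continuous_intros continuous_on_powr') auto
  then show ?thesis by (simp add: G_alt[abs_def])
qed

lemma G_bounds: "0 \<le> reserve_cdf N r x" "reserve_cdf N r x \<le> 1"
  unfolding G_alt by auto

lemma G_int: "reserve_cdf N r integrable_on {a..b}"
  by (rule integrable_continuous_interval) (rule continuous_on_subset[OF G_cont], auto)


lemma Phi_low:
  assumes "0 \<le> x" "x \<le> r"
  shows "PhiF N r x = real (N - 1) / real N * (x powr p / r powr k)"
proof -
  define f where "f t = real (N - 1) / real N * (t powr p / r powr k)" for t
  have pk: "p > 0" using N2 by (simp add: divide_pos_pos)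
  have c1: "continuous_on {0..x} (\<lambda>t. t powr p)"
    using pk by (intro continuous_on_powr' continuous_on_id continuous_on_const) auto
  have cont: "continuous_on {0..x} f"
    unfolding f_def by (intro continuous_on_mult_left continuous_on_divide continuous_on_const c1) (use r0 in auto)
  have der: "(f has_vector_derivative reserve_cdf N r t) (at t)" if t: "t \<in> {0<..<x}" for t
  proof -
    have t0: "0 < t" "t < r" using t assms by auto
    have "((\<lambda>t. t powr p) has_real_derivative p * t powr (p - 1)) (at t)"
      by (rule has_real_derivative_powr) (use t0 in simp)
    then have "(f has_real_derivative real (N - 1) / real N * (p * t powr (p - 1) / r powr k)) (at t)"
      unfolding f_def by (intro DERIV_cmult DERIV_cdivide)
    moreover have "real (N - 1) / real N * (p * t powr (p - 1) / r powr k) = reserve_cdf N r t"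
    proof -
      have "p - 1 = k" using p_eq by simp
      moreover have "real (N - 1) / real N * p = 1" using N2 by simp
      moreover have "real (N - 1) / real N * (p * t powr (p - 1) / r powr k) =
          (real (N - 1) / real N * p) * t powr (p - 1) / r powr k" by simp
      ultimately have "real (N - 1) / real N * (p * t powr (p - 1) / r powr k) = t powr k / r powr k"
        by simp
      also have "\<dots> = (t / r) powr k" using t0 r0 by (simp add: powr_divide)
      finally show ?thesis using t0 unfolding reserve_cdf_def by simp
    qed
    ultimately show ?thesis by (simp add: has_real_derivative_iff_has_vector_derivative)
  qed
  have "(reserve_cdf N r has_integral (f x - f 0)) {0..x}"
    by (rule fundamental_theorem_of_calculus_interior[OF assms(1) cont der]) auto
  then have "PhiF N r x = f x - f 0" unfolding PhiF_def by (rule integral_unique)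
  moreover have "f 0 = 0" unfolding f_def by simp
  ultimately show ?thesis unfolding f_def by simp
qed

lemma r_powr: "r powr p / r powr k = r"
proof -
  have "r powr p = r powr (1 + k)" using p_eq by simp
  also have "\<dots> = r * r powr k" using r0 by (simp add: powr_add)
  finally show ?thesis using r0 by simp
qed

lemma Phi_high:
  assumes "r \<le> x"
  shows "PhiF N r x = real (N - 1) / real N * r + (x - r)"
proof -
  have "PhiF N r x = integral {0..r} (reserve_cdf N r) + integral {r..x} (reserve_cdf N r)"
    unfolding PhiF_def using assms r0 by (intro Henstock_Kurzweil_Integration.integral_combine[symmetric] G_int) auto
  moreover have "integral {0..r} (reserve_cdf N r) = real (N - 1) / real N * r"
    using Phi_low[of r] r0 unfolding PhiF_def r_powr by simp
  moreover have "integral {r..x} (reserve_cdf N r) = integral {r..x} (\<lambda>_. 1::real)"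
    using r0 by (intro integral_cong) (auto simp: reserve_cdf_def)
  moreover have "integral {r..x} (\<lambda>_. 1::real) = x - r" using assms by simp
  ultimately show ?thesis by simp
qed

lemma Phi_neg: "x < 0 \<Longrightarrow> PhiF N r x = 0"
  unfolding PhiF_def by simp

lemma int_eq:
  assumes "a \<le> b"
  shows "integral {a..b} (reserve_cdf N r) = PhiF N r b - PhiF N r a"
proof (cases "0 \<le> a")
  case True
  have "integral {0..a} (reserve_cdf N r) + integral {a..b} (reserve_cdf N r) = integral {0..b} (reserve_cdf N r)"
    by (rule Henstock_Kurzweil_Integration.integral_combine) (use True assms G_int in auto)
  then show ?thesis unfolding PhiF_def by simp
next
  case False
  have z: "integral {a..c} (reserve_cdf N r) = 0" if "c \<le> 0" for c
  proof -
    have "integral {a..c} (reserve_cdf N r) = integral {a..c} (\<lambda>_. 0::real)"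
      using that by (intro integral_cong) (auto simp: reserve_cdf_def)
    then show ?thesis by simp
  qed
  show ?thesis
  proof (cases "b < 0")
    case True
    then show ?thesis using z[of b] False Phi_neg by simp
  next
    case False
    have "integral {a..b} (reserve_cdf N r) = integral {a..0} (reserve_cdf N r) + integral {0..b} (reserve_cdf N r)"
      using False \<open>\<not> 0 \<le> a\<close> by (intro Henstock_Kurzweil_Integration.integral_combine[symmetric] G_int) auto
    then show ?thesis using z[of 0] \<open>\<not> 0 \<le> a\<close> Phi_neg[of a] unfolding PhiF_def by simp
  qed
qed

lemma Phi_mono: "mono (PhiF N r)"
proof (rule monoI)
  fix x y :: real assume "x \<le> y"
  have "integral {x..y} (reserve_cdf N r) \<ge> 0"
    using G_bounds G_int by (intro integral_nonneg) auto
  then show "PhiF N r x \<le> PhiF N r y" using int_eq[OF \<open>x \<le> y\<close>] by simp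
qed


lemma xp: "0 < x \<Longrightarrow> x powr p = x * x powr k"
proof -
  assume "0 < x"
  have "x powr p = x powr (1 + k)" using p_eq by simp
  also have "\<dots> = x * x powr k" using \<open>0 < x\<close> by (simp add: powr_add)
  finally show ?thesis .
qed

lemma f_le_r: "0 \<le> x \<Longrightarrow> x \<le> r \<Longrightarrow> x powr p / r powr k \<le> r"
proof -
  assume "0 \<le> x" "x \<le> r"
  have "x powr p \<le> r powr p" using \<open>0 \<le> x\<close> \<open>x \<le> r\<close> N2 by (intro powr_mono2) auto
  then have "x powr p / r powr k \<le> r powr p / r powr k" using r0 by (simp add: divide_right_mono)
  then show ?thesis using r_powr by simp
qed

lemma phi_bounds: "0 \<le> phiF N r x" "phiF N r x \<le> r"
  unfolding phiF_def using f_le_r r0 by auto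

lemma phi_mono: "x \<le> y \<Longrightarrow> phiF N r x \<le> phiF N r y"
proof -
  assume xy: "x \<le> y"
  have "x powr p / r powr k \<le> y powr p / r powr k" if "0 < x"
  proof -
    have "x powr p \<le> y powr p" using that xy N2 by (intro powr_mono2) auto
    then show ?thesis using r0 by (simp add: divide_right_mono)
  qed
  then show ?thesis using xy f_le_r[of x] f_le_r[of y] r0 unfolding phiF_def by auto
qed

lemma xG: "0 \<le> x \<Longrightarrow> x \<le> r \<Longrightarrow> x * reserve_cdf N r x = x powr p / r powr k"
proof -
  assume x: "0 \<le> x" "x \<le> r"
  show ?thesis
  proof (cases "x = 0")
    case True then show ?thesis by (simp add: reserve_cdf_def)
  next
    case False
    show ?thesis
    proof (cases "x = r")
      case True then show ?thesis using r0 r_powr by (simp add: reserve_cdf_def)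
    next
      case False
      then have "x * reserve_cdf N r x = x * (x powr k / r powr k)"
        using x \<open>x \<noteq> 0\<close> r0 by (simp add: reserve_cdf_def powr_divide)
      also have "\<dots> = x powr p / r powr k" using xp[of x] x \<open>x \<noteq> 0\<close> by simp
      finally show ?thesis .
    qed
  qed
qed

lemma psi: "0 \<le> x \<Longrightarrow> x * reserve_cdf N r x - PhiF N r x = phiF N r x / real N"
proof -
  assume x: "0 \<le> x"
  have NN: "real (N - 1) = real N - 1" "real N > 0" using N2 by (auto simp: of_nat_diff)
  show ?thesis
  proof (cases "x \<le> r")
    case True
    have ph: "phiF N r x = x powr p / r powr k"
      using True x by (cases "x = 0") (auto simp: phiF_def)
    have key: "A - real (N - 1) / real N * A = A / real N" for A :: real
      using NN by (simp add: field_simps)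
    show ?thesis unfolding ph xG[OF x True] Phi_low[OF x True] by (rule key)
  next
    case False
    then have "phiF N r x = r" "reserve_cdf N r x = 1" using r0 by (auto simp: phiF_def reserve_cdf_def)
    then show ?thesis using Phi_high[of x] False NN by (simp add: field_simps)
  qed
qed

lemma Phi_ge: "0 \<le> x \<Longrightarrow> PhiF N r x \<ge> real (N - 1) / real N * phiF N r x"
proof -
  assume x: "0 \<le> x"
  show ?thesis
  proof (cases "x \<le> r")
    case True
    have ph: "phiF N r x = x powr p / r powr k"
      using True x by (cases "x = 0") (auto simp: phiF_def)
    show ?thesis unfolding ph Phi_low[OF x True] by simp
  next
    case False
    then have "phiF N r x = r" using r0 by (auto simp: phiF_def)
    then show ?thesis using Phi_high[of x] False by simp
  qed
qed

lemma Phi_nonneg: "0 \<le> x \<Longrightarrow> 0 \<le> PhiF N r x"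
proof -
  assume x: "0 \<le> x"
  have "0 \<le> real (N - 1) / real N * phiF N r x" using phi_bounds by simp
  then show ?thesis using Phi_ge[OF x] by linarith
qed

lemma Phi_le: "0 \<le> x \<Longrightarrow> PhiF N r x \<le> x"
proof -
  assume x: "0 \<le> x"
  have "x * reserve_cdf N r x \<le> x" using G_bounds x by (simp add: mult_left_le)
  moreover have "phiF N r x / real N \<ge> 0" using phi_bounds by simp
  ultimately show ?thesis using psi[OF x] by linarith
qed

lemma phi_meas: "phiF N r \<in> borel_measurable borel"
  unfolding phiF_def[abs_def] by measurable

lemma G_meas: "reserve_cdf N r \<in> borel_measurable borel"
  using G_cont by (rule borel_measurable_continuous_onI)

lemma Phi_meas: "PhiF N r \<in> borel_measurable borel"
  using Phi_mono by (rule borel_measurable_mono)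


lemma rev_alt: "spa_reserve_revenue (reserve_cdf N r) N v =
    top1 N v * reserve_cdf N r (top1 N v) - (PhiF N r (top1 N v) - PhiF N r (top2 N v))"
  unfolding spa_reserve_revenue_def using int_eq[OF top2_le_top1[OF N2]] by simp

lemma rev_meas: "spa_reserve_revenue (reserve_cdf N r) N \<in> borel_measurable (PiM {..<N} (\<lambda>_. borel))"
proof -
  have e: "spa_reserve_revenue (reserve_cdf N r) N = (\<lambda>v.
    top1 N v * reserve_cdf N r (top1 N v) - (PhiF N r (top1 N v) - PhiF N r (top2 N v)))"
    by (rule ext) (rule rev_alt)
  show ?thesis unfolding e
    by (intro borel_measurable_diff borel_measurable_times top_meas
        measurable_compose[OF top_meas(1) G_meas] measurable_compose[OF top_meas(1) Phi_meas]
        measurable_compose[OF top_meas(2) Phi_meas])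
qed

lemma rev_pt:
  assumes v: "\<forall>i<N. v i \<in> {0..1}"
  shows "(\<Sum>i<N. phiF N r (v i)) / real N \<le> spa_reserve_revenue (reserve_cdf N r) N v"
    and "\<bar>spa_reserve_revenue (reserve_cdf N r) N v\<bar> \<le> 2"
proof -
  define t1 where "t1 = top1 N v"
  define t2 where "t2 = top2 N v"
  obtain i0 where i0: "i0 < N" "v i0 = t1" using top1_in[of N v] N2 unfolding t1_def by auto
  obtain i j where ij: "i < N" "j < N" "t2 = min (v i) (v j)" using top2_in[OF N2, of v] unfolding t2_def by auto
  have t1r: "0 \<le> t1" "t1 \<le> 1" using i0 v by auto
  have t2r: "0 \<le> t2" "t2 \<le> 1" using ij v by auto
  have R: "spa_reserve_revenue (reserve_cdf N r) N v = phiF N r t1 / real N + PhiF N r t2"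
    unfolding rev_alt t1_def[symmetric] t2_def[symmetric] using psi[OF t1r(1)] by simp
  have NN: "real N > 0" using N2 by simp
  have le: "phiF N r (v i') \<le> phiF N r t2" if "i' \<in> {..<N} - {i0}" for i'
  proof -
    have "min (v i') (v i0) \<le> t2" unfolding t2_def using that i0 by (intro top2_ge) auto
    moreover have "v i' \<le> t1" using that top1_ge[of i' N v] unfolding t1_def by auto
    ultimately have "v i' \<le> t2" using i0 by simp
    then show ?thesis by (rule phi_mono)
  qed
  have "(\<Sum>i<N. phiF N r (v i)) = phiF N r (v i0) + (\<Sum>i\<in>{..<N} - {i0}. phiF N r (v i))"
    using i0 by (simp add: sum.remove)
  also have "(\<Sum>i\<in>{..<N} - {i0}. phiF N r (v i)) \<le> real (card ({..<N} - {i0})) * phiF N r t2"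
    using le by (intro sum_bounded_above) auto
  also have "card ({..<N} - {i0}) = N - 1" using i0 by simp
  finally have S: "(\<Sum>i<N. phiF N r (v i)) \<le> phiF N r t1 + real (N - 1) * phiF N r t2"
    using i0 by simp
  have "(\<Sum>i<N. phiF N r (v i)) / real N \<le> (phiF N r t1 + real (N - 1) * phiF N r t2) / real N"
    using S NN by (simp add: divide_right_mono)
  also have "\<dots> = phiF N r t1 / real N + real (N - 1) / real N * phiF N r t2"
    by (simp add: add_divide_distrib)
  also have "\<dots> \<le> phiF N r t1 / real N + PhiF N r t2" using Phi_ge[OF t2r(1)] by simp
  finally show "(\<Sum>i<N. phiF N r (v i)) / real N \<le> spa_reserve_revenue (reserve_cdf N r) N v"
    unfolding R .
  have a: "0 \<le> phiF N r t1 / real N" "phiF N r t1 / real N \<le> 1"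
    using phi_bounds[of t1] r1 NN N2 by (auto simp: divide_le_eq)
  have b: "0 \<le> PhiF N r t2" "PhiF N r t2 \<le> 1" using Phi_nonneg[OF t2r(1)] Phi_le[OF t2r(1)] t2r by auto
  show "\<bar>spa_reserve_revenue (reserve_cdf N r) N v\<bar> \<le> 2" unfolding R using a b by simp
qed

end


lemma marg_facts:
  assumes "is_marginal \<mu>"
  shows "prob_space \<mu>" "sets \<mu> = sets borel" "space \<mu> = UNIV" "AE x in \<mu>. x \<in> {0..1}"
    "\<And>x e. x \<in> {0..1} \<Longrightarrow> e > 0 \<Longrightarrow> measure \<mu> {x - e<..<x + e} > 0"
proof -
  show P: "prob_space \<mu>" and S: "sets \<mu> = sets borel" using assms unfolding is_marginal_def by auto
  show "space \<mu> = UNIV" using sets_eq_imp_space_eq[OF S] by simp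
  show "AE x in \<mu>. x \<in> {0..1}" using assms unfolding is_marginal_def
    by (intro prob_space.AE_prob_1) auto
  show "\<And>x e. x \<in> {0..1} \<Longrightarrow> e > 0 \<Longrightarrow> measure \<mu> {x - e<..<x + e} > 0"
    using assms unfolding is_marginal_def by auto
qed

lemma one_minus_cdf:
  assumes "is_marginal \<mu>"
  shows "1 - cdf \<mu> x = measure \<mu> {x<..}"
proof -
  interpret prob_space \<mu> using marg_facts[OF assms] by simp
  have "{..x} \<in> sets \<mu>" using marg_facts(2)[OF assms] by simp
  then have "measure \<mu> (space \<mu> - {..x}) = 1 - measure \<mu> {..x}" by (rule prob_compl)
  moreover have "space \<mu> - {..x} = {x<..}" using marg_facts(3)[OF assms] by auto
  ultimately show ?thesis by (simp add: cdf_def)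
qed

lemma integral_phi:
  assumes N2: "N \<ge> 2" and r: "0 < r" "r \<le> 1" and m: "is_marginal \<mu>"
  shows "integral\<^sup>L \<mu> (phiF N r) = L_fun N \<mu> r"
proof -
  interpret prob_space \<mu> using marg_facts[OF m] by simp
  have S: "sets \<mu> = sets borel" using marg_facts[OF m] by simp
  define f where "f x = x powr (real N / real (N - 1)) / r powr (1 / real (N - 1))" for x
  define g where "g x = indicator {0..r} x * f x + r * indicator {r<..} x" for x
  have fm: "f \<in> borel_measurable borel" unfolding f_def by measurable
  have gm: "g \<in> borel_measurable \<mu>" unfolding g_def measurable_cong_sets[OF S refl]
    using fm by measurable
  have ae: "AE x in \<mu>. phiF N r x = g x"
    using marg_facts(4)[OF m]
  proof eventually_elim
    case (elim x)
    then show ?case unfolding g_def f_def phiF_def using r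
      by (cases "x = 0") (auto simp: indicator_def)
  qed
  have pm: "phiF N r \<in> borel_measurable \<mu>"
    by (subst measurable_cong_sets[OF S refl]) (rule phi_meas[OF N2 r])
  have i1: "integrable \<mu> (\<lambda>x. indicator {0..r} x * f x)"
  proof (rule integrable_const_bound[where B=r])
    show "AE x in \<mu>. norm (indicator {0..r} x * f x) \<le> r"
      using f_le_r[OF N2 r] phi_bounds[OF N2 r] r unfolding f_def
      by (intro AE_I2) (auto simp: indicator_def)
    show "(\<lambda>x. indicator {0..r} x * f x) \<in> borel_measurable \<mu>"
      unfolding measurable_cong_sets[OF S refl] using fm by measurable
  qed
  have i2: "integrable \<mu> (\<lambda>x. r * indicator {r<..} x)"
    using emeasure_finite by (intro integrable_mult_right integrable_real_indicator) (auto simp: S less_top[symmetric])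
  have "integral\<^sup>L \<mu> (phiF N r) = integral\<^sup>L \<mu> g"
    by (rule integral_cong_AE[OF pm gm ae])
  also have "\<dots> = integral\<^sup>L \<mu> (\<lambda>x. indicator {0..r} x * f x) + integral\<^sup>L \<mu> (\<lambda>x. r * indicator {r<..} x)"
    unfolding g_def by (rule Bochner_Integration.integral_add[OF i1 i2])
  also have "integral\<^sup>L \<mu> (\<lambda>x. r * indicator {r<..} x) = r * measure \<mu> {r<..}"
    using marg_facts(3)[OF m] by simp
  also have "measure \<mu> {r<..} = 1 - cdf \<mu> r" using one_minus_cdf[OF m] by simp
  finally show ?thesis unfolding L_fun_def set_lebesgue_integral_def f_def by simp
qed


lemma int_lower:
  assumes N2: "N \<ge> 2" and r: "0 < r" "r \<le> 1" and m: "is_marginal \<mu>"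
    and pi: "\<pi> \<in> joint_structures N \<mu>"
  shows "L_fun N \<mu> r \<le> integral\<^sup>L \<pi> (spa_reserve_revenue (reserve_cdf N r) N)"
proof -
  have P: "prob_space \<pi>" and S: "sets \<pi> = sets (PiM {..<N} (\<lambda>_. borel))"
    and D: "\<And>i. i < N \<Longrightarrow> distr \<pi> borel (\<lambda>v. v i) = \<mu>"
    using pi unfolding joint_structures_def by auto
  interpret prob_space \<pi> by (rule P)
  have cm: "(\<lambda>v. v i) \<in> borel_measurable \<pi>" if "i < N" for i
    by (subst measurable_cong_sets[OF S refl]) (rule comp_meas[OF that])
  have aei: "AE v in \<pi>. v i \<in> {0..1}" if i: "i < N" for i
  proof -
    have "AE x in distr \<pi> borel (\<lambda>v. v i). x \<in> {0..1}" unfolding D[OF i] by (rule marg_facts(4)[OF m])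
    then show ?thesis by (rule AE_distrD[OF cm[OF i]])
  qed
  have "AE v in \<pi>. \<forall>i\<in>{..<N}. v i \<in> {0..1}"
    by (rule AE_finite_allI[OF finite_lessThan]) (rule aei, simp)
  then have ae: "AE v in \<pi>. \<forall>i<N. v i \<in> {0..1}"
    by (rule eventually_mono) auto
  have Rm: "spa_reserve_revenue (reserve_cdf N r) N \<in> borel_measurable \<pi>"
    by (subst measurable_cong_sets[OF S refl]) (rule rev_meas[OF N2 r])
  have Ri: "integrable \<pi> (spa_reserve_revenue (reserve_cdf N r) N)"
    by (rule integrable_const_bound[where B=2]) (use ae rev_pt(2)[OF N2 r] Rm in auto)
  have phim: "(\<lambda>v. phiF N r (v i)) \<in> borel_measurable \<pi>" if "i < N" for i
    by (rule measurable_compose[OF cm[OF that] phi_meas[OF N2 r]])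
  have phii: "integrable \<pi> (\<lambda>v. phiF N r (v i))" if "i < N" for i
  proof (rule integrable_const_bound[where B=1])
    have "norm (phiF N r x) \<le> 1" for x using phi_bounds[OF N2 r, of x] r by simp
    then show "AE x in \<pi>. norm (phiF N r (x i)) \<le> 1" by simp
  qed (rule phim[OF that])
  have si: "integrable \<pi> (\<lambda>v. (\<Sum>i<N. phiF N r (v i)) / real N)"
    using phii by (intro integrable_divide integrable_sum) auto
  have phiint: "integral\<^sup>L \<pi> (\<lambda>v. phiF N r (v i)) = L_fun N \<mu> r" if i: "i < N" for i
  proof -
    have "integral\<^sup>L \<pi> (\<lambda>v. phiF N r (v i)) = integral\<^sup>L (distr \<pi> borel (\<lambda>v. v i)) (phiF N r)"
      by (rule integral_distr[symmetric, OF cm[OF i] phi_meas[OF N2 r]])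
    also have "\<dots> = L_fun N \<mu> r" using D[OF i] integral_phi[OF N2 r m] by simp
    finally show ?thesis .
  qed
  have "integral\<^sup>L \<pi> (\<lambda>v. (\<Sum>i<N. phiF N r (v i)) / real N) = (\<Sum>i<N. integral\<^sup>L \<pi> (\<lambda>v. phiF N r (v i))) / real N"
    using phii by (simp add: integral_sum)
  also have "\<dots> = L_fun N \<mu> r" using phiint N2 by simp
  finally have eq: "integral\<^sup>L \<pi> (\<lambda>v. (\<Sum>i<N. phiF N r (v i)) / real N) = L_fun N \<mu> r" .
  have "integral\<^sup>L \<pi> (\<lambda>v. (\<Sum>i<N. phiF N r (v i)) / real N) \<le> integral\<^sup>L \<pi> (spa_reserve_revenue (reserve_cdf N r) N)"
    by (rule integral_mono_AE[OF si Ri]) (use ae rev_pt(1)[OF N2 r] in auto)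
  then show ?thesis unfolding eq .
qed

lemma joint_ne:
  assumes m: "is_marginal \<mu>"
  shows "joint_structures N \<mu> \<noteq> {}"
proof -
  have S: "sets \<mu> = sets borel" using marg_facts[OF m] by simp
  define f where "f = (\<lambda>x::real. \<lambda>i\<in>{..<N}. x)"
  have fm: "f \<in> measurable \<mu> (PiM {..<N} (\<lambda>_. borel))"
    unfolding f_def by (intro measurable_restrict) (simp add: measurable_ident_sets S)
  define \<pi> where "\<pi> = distr \<mu> (PiM {..<N} (\<lambda>_. borel)) f"
  have "\<pi> \<in> joint_structures N \<mu>"
    unfolding joint_structures_def
  proof (intro CollectI conjI allI impI)
    show "prob_space \<pi>" unfolding \<pi>_def
      by (intro prob_space.prob_space_distr fm) (use marg_facts[OF m] in auto)
    show "sets \<pi> = sets (PiM {..<N} (\<lambda>_. borel))" unfolding \<pi>_def by simp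
    fix i assume i: "i < N"
    have "distr \<pi> borel (\<lambda>v. v i) = distr \<mu> borel ((\<lambda>v. v i) \<circ> f)"
      unfolding \<pi>_def by (rule distr_distr[OF comp_meas[OF i] fm])
    also have "\<dots> = distr \<mu> \<mu> (\<lambda>x. x)"
      by (rule distr_cong) (use i S in \<open>auto simp: f_def\<close>)
    also have "\<dots> = \<mu>" by (rule distr_id)
    finally show "distr \<pi> borel (\<lambda>v. v i) = \<mu>" .
  qed
  then show ?thesis by blast
qed


lemma pt_lower:
  assumes N2: "N \<ge> 2" and a: "0 < a" and x: "a \<le> x" "x \<le> 1" and y: "0 \<le> y"
  shows "(a/2) powr (real N / real (N - 1)) * indicator {a/2<..<a} y + x * indicator {x<..} y \<le> phiF N x y"
proof -
  have x0: "0 < x" using a x by simp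
  show ?thesis
  proof (cases "x < y")
    case True
    then show ?thesis using x a by (auto simp: indicator_def phiF_def)
  next
    case False
    show ?thesis
    proof (cases "y \<in> {a/2<..<a}")
      case True
      have y0: "0 < y" using True a by auto
      have k: "0 < x powr (1 / real (N - 1))" "x powr (1 / real (N - 1)) \<le> 1"
        using x0 x N2 by (auto intro: powr_le1)
      have "(a/2) powr (real N / real (N - 1)) \<le> y powr (real N / real (N - 1))"
        using True a by (intro powr_mono2) auto
      also have "\<dots> \<le> y powr (real N / real (N - 1)) / x powr (1 / real (N - 1))"
        using k by (simp add: le_divide_eq mult_left_le)
      finally show ?thesis using True False y0 by (auto simp: indicator_def phiF_def)
    next
      case False
      then show ?thesis using \<open>\<not> x < y\<close> phi_bounds(1)[OF N2 x0 x(2), of y]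
        by (auto simp: indicator_def)
    qed
  qed
qed

lemma L_lower:
  assumes N2: "N \<ge> 2" and m: "is_marginal \<mu>" and a: "0 < a" and x: "a \<le> x" "x \<le> 1"
  shows "(a/2) powr (real N / real (N - 1)) * measure \<mu> {a/2<..<a} + x * (1 - cdf \<mu> x) \<le> L_fun N \<mu> x"
proof -
  interpret prob_space \<mu> using marg_facts[OF m] by simp
  have S: "sets \<mu> = sets borel" using marg_facts[OF m] by simp
  have x0: "0 < x" using a x by simp
  define c where "c = (a/2) powr (real N / real (N - 1))"
  have i1: "integrable \<mu> (\<lambda>y. c * indicator {a/2<..<a} y)"
    using emeasure_finite by (intro integrable_mult_right integrable_real_indicator) (auto simp: S less_top[symmetric])
  have i2: "integrable \<mu> (\<lambda>y. x * indicator {x<..} y)"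
    using emeasure_finite by (intro integrable_mult_right integrable_real_indicator) (auto simp: S less_top[symmetric])
  have pm: "phiF N x \<in> borel_measurable \<mu>"
    by (subst measurable_cong_sets[OF S refl]) (rule phi_meas[OF N2 x0 x(2)])
  have pi: "integrable \<mu> (phiF N x)"
  proof (rule integrable_const_bound[where B=1])
    have "norm (phiF N x y) \<le> 1" for y using phi_bounds[OF N2 x0 x(2), of y] x by simp
    then show "AE y in \<mu>. norm (phiF N x y) \<le> 1" by simp
  qed (rule pm)
  have "integral\<^sup>L \<mu> (\<lambda>y. c * indicator {a/2<..<a} y + x * indicator {x<..} y) \<le> integral\<^sup>L \<mu> (phiF N x)"
    by (rule integral_mono_AE[OF Bochner_Integration.integrable_add[OF i1 i2] pi])
      (use marg_facts(4)[OF m] in \<open>auto elim!: eventually_mono intro: pt_lower[OF N2 a x, unfolded c_def[symmetric]]\<close>)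
  moreover have "integral\<^sup>L \<mu> (\<lambda>y. c * indicator {a/2<..<a} y + x * indicator {x<..} y)
      = c * measure \<mu> {a/2<..<a} + x * measure \<mu> {x<..}"
    using marg_facts(3)[OF m] by (simp add: Bochner_Integration.integral_add[OF i1 i2])
  moreover have "integral\<^sup>L \<mu> (phiF N x) = L_fun N \<mu> x" by (rule integral_phi[OF N2 x0 x(2) m])
  ultimately show ?thesis unfolding c_def one_minus_cdf[OF m] by simp
qed

theorem theorem3:
  fixes N :: nat and \<mu> :: "real measure" and rstar :: real
  assumes "N \<ge> 2"
    and "is_marginal \<mu>"
    and "rstar \<in> {0<..1}"
    and "\<forall>r\<in>{0<..1}. L_fun N \<mu> r \<le> L_fun N \<mu> rstar"
  shows "revenue_guarantee N \<mu> (spa_reserve_revenue (reserve_cdf N rstar) N)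
           > posted_price_guarantee \<mu>"
proof -
  note N2 = assms(1) and m = assms(2)
  have r: "0 < rstar" "rstar \<le> 1" using assms(3) by auto
  define Ls where "Ls = L_fun N \<mu> rstar"
  define p where "p = real N / real (N - 1)"
  have Lmax: "L_fun N \<mu> x \<le> Ls" if "0 < x" "x \<le> 1" for x using assms(4) that unfolding Ls_def by auto
  have cdf_le: "cdf \<mu> x \<le> 1" "0 \<le> cdf \<mu> x" for x
  proof -
    interpret prob_space \<mu> using marg_facts[OF m] by simp
    show "cdf \<mu> x \<le> 1" "0 \<le> cdf \<mu> x" by (auto simp: cdf_def)
  qed
  have mpos: "measure \<mu> {b/2<..<b} > 0" if "0 < b" "b \<le> 1" for b
    using marg_facts(5)[OF m, of "3*b/4" "b/4"] that by (simp add: field_simps)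
  have Lpos: "Ls > 0"
  proof -
    have "(1/2) powr p * measure \<mu> {1/2<..<1} + 1 * (1 - cdf \<mu> 1) \<le> L_fun N \<mu> 1"
      using L_lower[OF N2 m, of 1 1] unfolding p_def by simp
    moreover have "(1/2) powr p * measure \<mu> {1/2<..<1} > 0" using mpos[of 1] by simp
    moreover have "1 - cdf \<mu> 1 \<ge> 0" using cdf_le by simp
    ultimately show ?thesis using Lmax[of 1] by simp
  qed
  define a where "a = min 1 (Ls / 2)"
  have a: "0 < a" "a \<le> 1" "a < Ls" using Lpos unfolding a_def by auto
  define c where "c = (a/2) powr p * measure \<mu> {a/2<..<a}"
  have c: "c > 0" unfolding c_def using mpos[OF a(1,2)] a by simp
  have bound: "x * (1 - cdf \<mu> x) \<le> max a (Ls - c)" if x: "x \<in> {0..1}" for x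
  proof (cases "x < a")
    case True
    have "x * (1 - cdf \<mu> x) \<le> x * 1" using x cdf_le[of x] by (intro mult_left_mono) auto
    then show ?thesis using True by simp
  next
    case False
    then have "c + x * (1 - cdf \<mu> x) \<le> L_fun N \<mu> x"
      using L_lower[OF N2 m a(1), of x] x unfolding c_def p_def by simp
    moreover have "L_fun N \<mu> x \<le> Ls" using Lmax[of x] False a x by simp
    ultimately show ?thesis by simp
  qed
  have "posted_price_guarantee \<mu> \<le> max a (Ls - c)"
    unfolding posted_price_guarantee_def by (rule cSUP_least) (use bound in auto)
  also have "\<dots> < Ls" using a c by simp
  also have "Ls \<le> revenue_guarantee N \<mu> (spa_reserve_revenue (reserve_cdf N rstar) N)"
    unfolding revenue_guarantee_def Ls_def
    by (rule cINF_greatest[OF joint_ne[OF m]]) (rule int_lower[OF N2 r m])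
  finally show ?thesis .
qed

end
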